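(* Let $0<a_1\le a_2$, $q\ge2$, and let $e_1,e_2,\ldots$ be non-negative integers with $a_1q^n/n\le e_n\le a_2q^n/n$ for all $n\ge1$. Define $c_{i,j}$ by the formal power series identity $$\sum_{i,j\ge0} c_{i,j}x^iy^j = \prod_{i=1}^\infty (1-x^iy)^{-e_i}.$$ Then there exist constants $C$ and $D>1$ depending only on $a_1$ and $a_2$ such that for all integers $n\ge1$ and $0\le m\le n$, $$\frac{\sum_{j=m+1}^n c_{n,j}}{\sum_{j=0}^n c_{n,j}} \le n^C D^{-m}.$$ *)

theory Defs
  imports "HOL-Analysis.Analysis" "HOL-Computational_Algebra.Formal_Power_Series"
begin

text \<open>Bivariate formal power series in x and y are modelled as \<open>real fps fps\<close>:
  the outer variable is x, the inner variable (coefficients) is y.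
  So for \<open>F :: real fps fps\<close>, the coefficient of x^i y^j is \<open>fps_nth (fps_nth F i) j\<close>.\<close>

definition fps_Y :: "real fps fps" where
  "fps_Y = fps_const fps_X"

definition gen_factor :: "(nat \<Rightarrow> nat) \<Rightarrow> nat \<Rightarrow> real fps fps" where
  "gen_factor e i = inverse ((1 - fps_X ^ i * fps_Y) ^ e i)"

definition gen_series :: "(nat \<Rightarrow> nat) \<Rightarrow> real fps fps" where
  "gen_series e = (\<Prod>k. gen_factor e (Suc k))"

definition cij :: "(nat \<Rightarrow> nat) \<Rightarrow> nat \<Rightarrow> nat \<Rightarrow> real" where
  "cij e i j = fps_nth (fps_nth (gen_series e) i) j"

end

theory Submission
  imports Defs
begin

no_notation vec_nth (infixl \<open>$\<close> 90)
notation fps_nth (infixl \<open>$\<close> 75)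


lemma mult_nth2: "((F::real fps fps) * H) $ n $ j = (\<Sum>a=0..n. \<Sum>c=0..j. F$a$c * H$(n-a)$(j-c))"
  by (simp add: fps_mult_nth fps_sum_nth)

definition NN :: "real fps fps \<Rightarrow> bool" where "NN F = (\<forall>n j. 0 \<le> F$n$j)"

lemma NN_mult: "NN F \<Longrightarrow> NN H \<Longrightarrow> NN (F*H)"
  unfolding NN_def mult_nth2 by (auto intro!: sum_nonneg mult_nonneg_nonneg)

lemma NN_one: "NN 1" unfolding NN_def by auto

lemma NN_power: "NN F \<Longrightarrow> NN (F^k)"
  by (induction k) (auto simp: NN_one NN_mult)

definition U :: "nat \<Rightarrow> real fps fps \<Rightarrow> bool" where
  "U n F = (F$0 = 1 \<and> (\<forall>t. 0<t \<and> t\<le>n \<longrightarrow> F$t = 0))"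

lemma U_mult_right:
  assumes "U n H" "t \<le> n"
  shows "(F*H)$t = F$t"
proof -
  have "(F*H)$t = (\<Sum>a=0..t. F$a * H$(t-a))" by (simp add: fps_mult_nth)
  also have "\<dots> = (\<Sum>a=0..t. if a = t then F$t else 0)"
    using assms by (intro sum.cong) (auto simp: U_def)
  also have "\<dots> = F$t" by simp
  finally show ?thesis .
qed

lemma U_mult: "U n F \<Longrightarrow> U n H \<Longrightarrow> U n (F*H)"
  using U_mult_right[of n H] unfolding U_def by auto

lemma U_one: "U n 1" unfolding U_def by auto

lemma U_power: "U n F \<Longrightarrow> U n (F^k)"
  by (induction k) (auto simp: U_one U_mult)

definition Gi :: "nat \<Rightarrow> real fps fps" where
  "Gi i = Abs_fps (\<lambda>n. Abs_fps (\<lambda>j. if n = i*j then 1 else 0))"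

lemma Gi_nth: "Gi i $ n $ j = (if n = i*j then 1 else 0)"
  by (simp add: Gi_def)

lemma NN_Gi: "NN (Gi i)" by (simp add: NN_def Gi_nth)

lemma U_Gi: "i \<ge> 1 \<Longrightarrow> U (i-1) (Gi i)"
  unfolding U_def
proof safe
  assume "i \<ge> 1"
  then show "Gi i $ 0 = 1" by (auto simp: fps_eq_iff Gi_nth)
next
  fix t assume "1 \<le> i" "0 < t" "t \<le> i - 1"
  then show "Gi i $ t = 0"
    by (auto simp: fps_eq_iff Gi_nth) (metis One_nat_def Suc_leI diff_less le_trans less_le_not_le mult.right_neutral mult_le_mono2 nat_neq_iff zero_less_one mult_0_right)
qed

lemma A_Gi:
  assumes "i \<ge> 1"
  shows "(1 - fps_X^i * fps_Y) * Gi i = 1"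
proof (rule fps_ext, rule fps_ext)
  fix n j
  have "((1 - fps_X^i * fps_Y) * Gi i) $ n $ j = Gi i $ n $ j - (fps_X^i * (fps_Y * Gi i)) $ n $ j"
    by (simp add: algebra_simps)
  also have "\<dots> = (1::real fps fps) $ n $ j"
    using assms
    apply (simp add: fps_X_power_mult_nth fps_Y_def Gi_nth)
    apply (cases j)
     apply auto
    done
  finally show "((1 - fps_X^i * fps_Y) * Gi i) $ n $ j = (1::real fps fps) $ n $ j" .
qed

lemma inverse_right_one:
  fixes B :: "real fps fps"
  assumes "B $ 0 = 1"
  shows "B * inverse B = 1"
proof -
  have i1: "inverse (B$0) = 1" using assms by simp
  have "inverse B = fps_right_inverse B (inverse (B$0))" by (simp only: fps_inverse_def)
  then have "inverse B = fps_right_inverse B 1" by (simp only: i1)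
  then show ?thesis using fps_right_inverse[of B 1] assms by simp
qed

lemma gen_factor_eq:
  assumes "i \<ge> 1"
  shows "gen_factor e i = (Gi i)^(e i)"
proof -
  define A where "A = (1 - fps_X^i * fps_Y :: real fps fps)"
  define B where "B = A ^ e i"
  have "U 0 A" using assms by (simp add: U_def A_def)
  hence "U 0 B" unfolding B_def by (rule U_power)
  hence B0: "B $ 0 = 1" by (simp add: U_def)
  have BG: "B * (Gi i)^(e i) = 1"
    unfolding B_def A_def power_mult_distrib[symmetric] using A_Gi[OF assms] by simp
  have "inverse B = inverse B * (B * (Gi i)^(e i))" using BG by simp
  also have "\<dots> = (B * inverse B) * (Gi i)^(e i)" by (simp add: algebra_simps)
  also have "\<dots> = (Gi i)^(e i)" using inverse_right_one[OF B0] by simp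
  finally show ?thesis by (simp add: gen_factor_def B_def A_def)
qed

definition P :: "(nat \<Rightarrow> nat) \<Rightarrow> nat \<Rightarrow> real fps fps" where
  "P e N = (\<Prod>k<N. gen_factor e (Suc k))"

lemma U_gf: "U k (gen_factor e (Suc k))"
  using U_power[OF U_Gi[of "Suc k"]] by (simp add: gen_factor_eq)

lemma NN_gf: "NN (gen_factor e (Suc k))"
  using NN_power[OF NN_Gi] by (simp add: gen_factor_eq)

lemma NN_P: "NN (P e N)"
  unfolding P_def by (induction N) (auto simp: NN_one NN_mult NN_gf)

lemma P_stable: "n \<le> N \<Longrightarrow> P e (Suc N) $ n = P e N $ n"
  unfolding P_def using U_mult_right[OF U_gf] by simp

lemma P_stable2: "n \<le> N \<Longrightarrow> P e N $ n = P e n $ n"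
proof (induction N rule: dec_induct)
  case (step N) then show ?case using P_stable[of n N] by simp
qed simp

lemma P_0: "P e N $ 0 = 1"
  using P_stable2[of 0 N e] by (simp add: P_def)

lemma gen_series_nth: "gen_series e $ n = P e n $ n"
proof -
  define L where "L = Abs_fps (\<lambda>n. P e n $ n)"
  have lim: "(\<lambda>N. \<Prod>i\<le>N. gen_factor e (Suc (i+0))) \<longlonglongrightarrow> L"
  proof (rule tendsto_fpsI)
    fix m
    show "\<forall>\<^sub>F N in sequentially. (\<Prod>i\<le>N. gen_factor e (Suc (i+0))) $ m = L $ m"
      unfolding eventually_sequentially
    proof (intro exI allI impI)
      fix N assume "m \<le> N"
      have "(\<Prod>i\<le>N. gen_factor e (Suc (i+0))) = P e (Suc N)"
        by (simp add: P_def lessThan_Suc_atMost)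
      then show "(\<Prod>i\<le>N. gen_factor e (Suc (i+0))) $ m = L $ m"
        using P_stable2[of m "Suc N" e] \<open>m \<le> N\<close> by (simp add: L_def)
    qed
  qed
  have "L \<noteq> 0"
  proof
    assume "L = 0"
    then have "L $ 0 = 0" by simp
    then show False by (simp add: L_def P_0)
  qed
  with lim have "raw_has_prod (\<lambda>k. gen_factor e (Suc k)) 0 L"
    by (simp add: raw_has_prod_def)
  hence "(\<lambda>k. gen_factor e (Suc k)) has_prod L" by (simp add: has_prod_def)
  hence "gen_series e = L" unfolding gen_series_def by (rule has_prod_unique[symmetric])
  then show ?thesis by (simp add: L_def)
qed

lemma cij_eq: "cij e n j = P e n $ n $ j"
  by (simp add: cij_def gen_series_nth)

lemma NN_term_le:
  assumes "NN F" "NN H" "a \<le> n" "c \<le> j"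
  shows "F$a$c * H$(n-a)$(j-c) \<le> (F*H)$n$j"
proof -
  have "F$a$c * H$(n-a)$(j-c) \<le> (\<Sum>c=0..j. F$a$c * H$(n-a)$(j-c))"
    using assms by (intro member_le_sum) (auto simp: NN_def)
  also have "\<dots> \<le> (\<Sum>a=0..n. \<Sum>c=0..j. F$a$c * H$(n-a)$(j-c))"
    using assms
    by (intro member_le_sum[where f="\<lambda>a. \<Sum>c=0..j. F$a$c * H$(n-a)$(j-c)"]) (auto simp: NN_def intro!: sum_nonneg)
  finally show ?thesis by (simp add: mult_nth2)
qed

lemma NN_two_terms_le:
  assumes "NN F" "NN H" "1 \<le> n" "c \<le> j" "c' \<le> j"
  shows "F$0$c * H$n$(j-c) + F$n$c' * H$0$(j-c') \<le> (F*H)$n$j"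
proof -
  define \<phi> where "\<phi> a = (\<Sum>c=0..j. F$a$c * H$(n-a)$(j-c))" for a
  have nn: "0 \<le> \<phi> a" for a using assms by (auto simp: \<phi>_def NN_def intro!: sum_nonneg)
  have t1: "F$0$c * H$n$(j-c) \<le> \<phi> 0"
  proof -
    have "F$0$c * H$(n-0)$(j-c) \<le> (\<Sum>c=0..j. F$0$c * H$(n-0)$(j-c))"
      using assms by (intro member_le_sum) (auto simp: NN_def)
    then show ?thesis by (simp add: \<phi>_def)
  qed
  have t2: "F$n$c' * H$0$(j-c') \<le> \<phi> n"
  proof -
    have "F$n$c' * H$(n-n)$(j-c') \<le> (\<Sum>c=0..j. F$n$c * H$(n-n)$(j-c))"
      using assms by (intro member_le_sum[where f="\<lambda>c. F$n$c * H$(n-n)$(j-c)"]) (auto simp: NN_def)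
    then show ?thesis by (simp add: \<phi>_def)
  qed
  have "\<phi> 0 + \<phi> n = sum \<phi> {0, n}" using assms by simp
  also have "\<dots> \<le> sum \<phi> {0..n}" using nn by (intro sum_mono2) auto
  finally show ?thesis using t1 t2 by (simp add: mult_nth2 \<phi>_def)
qed

lemma Gi_pow_1:
  assumes "i \<ge> 1"
  shows "real k \<le> ((Gi i)^k) $ i $ 1"
proof (induction k)
  case 0 then show ?case using assms by simp
next
  case (Suc k)
  have U: "U (i-1) ((Gi i)^k)" by (rule U_power[OF U_Gi[OF assms]])
  have "(Gi i)^k $ 0 $ 0 * Gi i $ i $ (1-0) + (Gi i)^k $ i $ 1 * Gi i $ 0 $ (1-1) \<le> ((Gi i)^k * Gi i) $ i $ 1"
    using assms by (intro NN_two_terms_le NN_power NN_Gi) auto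
  moreover have "(Gi i)^k $ 0 $ 0 = 1" using U by (simp add: U_def)
  ultimately show ?case using Suc assms by (simp add: Gi_nth power_Suc2 del: power_Suc)
qed

lemma c1_ge:
  assumes "n \<ge> 1"
  shows "real (e n) \<le> P e n $ n $ 1"
proof -
  obtain m where n: "n = Suc m" using assms by (cases n) auto
  have "P e m $ 0 $ 0 * gen_factor e n $ (n-0) $ (1-0) \<le> (P e m * gen_factor e n) $ n $ 1"
    using n NN_gf[of e m] by (intro NN_term_le NN_P) auto
  moreover have "P e n = P e m * gen_factor e n" by (simp add: P_def n)
  ultimately show ?thesis using Gi_pow_1[of n "e n"] assms by (simp add: P_0 gen_factor_eq)
qed


lemma tri_le:
  fixes \<phi> :: "nat \<Rightarrow> nat \<Rightarrow> real"
  assumes "\<And>a b. 0 \<le> \<phi> a b"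
  shows "(\<Sum>n\<le>N. \<Sum>a\<le>n. \<phi> a (n-a)) \<le> (\<Sum>a\<le>N. \<Sum>b\<le>N. \<phi> a b)"
proof -
  have "(\<Sum>n\<le>N. \<Sum>a\<le>n. \<phi> a (n-a)) = (\<Sum>(a,b)\<in>{(a,b). a+b \<le> N}. \<phi> a b)"
    by (rule sum.triangle_reindex_eq[symmetric])
  also have "\<dots> \<le> (\<Sum>(a,b)\<in>{..N}\<times>{..N}. \<phi> a b)"
    using assms by (intro sum_mono2) auto
  also have "\<dots> = (\<Sum>a\<le>N. \<Sum>b\<le>N. \<phi> a b)" by (simp add: sum.cartesian_product)
  finally show ?thesis .
qed

lemma pw: "b \<le> a \<Longrightarrow> (x::real)^a = x^b * x^(a-b)"
  by (metis le_add_diff_inverse power_add)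

definition S :: "real \<Rightarrow> real \<Rightarrow> nat \<Rightarrow> real fps fps \<Rightarrow> real" where
  "S r D N F = (\<Sum>n\<le>N. \<Sum>j\<le>N. F$n$j * r^n * D^j)"

lemma S_nonneg: "NN F \<Longrightarrow> 0 \<le> r \<Longrightarrow> 0 \<le> D \<Longrightarrow> 0 \<le> S r D N F"
  unfolding S_def NN_def by (auto intro!: sum_nonneg)

lemma S_mult:
  assumes "NN F" "NN H" "0 \<le> r" "0 \<le> D"
  shows "S r D N (F*H) \<le> S r D N F * S r D N H"
proof -
  define f where "f a c = F$a$c * r^a * D^c" for a c
  define h where "h a c = H$a$c * r^a * D^c" for a c
  have f0: "0 \<le> f a c" for a c using assms by (auto simp: f_def NN_def)
  have h0: "0 \<le> h a c" for a c using assms by (auto simp: h_def NN_def)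
  have "S r D N (F*H) = (\<Sum>n\<le>N. \<Sum>j\<le>N. \<Sum>a\<le>n. \<Sum>c\<le>j. f a c * h (n-a) (j-c))"
    unfolding S_def mult_nth2 atLeast0AtMost sum_distrib_right
    apply (intro sum.cong refl)
    subgoal for n j a c using pw[of a n r] pw[of c j D] by (simp add: f_def h_def algebra_simps)
    done
  also have "\<dots> = (\<Sum>n\<le>N. \<Sum>a\<le>n. \<Sum>j\<le>N. \<Sum>c\<le>j. f a c * h (n-a) (j-c))"
    by (intro sum.cong refl sum.swap)
  also have "\<dots> \<le> (\<Sum>a\<le>N. \<Sum>b\<le>N. \<Sum>j\<le>N. \<Sum>c\<le>j. f a c * h b (j-c))"
    by (rule tri_le[where \<phi>="\<lambda>a b. \<Sum>j\<le>N. \<Sum>c\<le>j. f a c * h b (j-c)"])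
       (intro sum_nonneg mult_nonneg_nonneg f0 h0)
  also have "\<dots> \<le> (\<Sum>a\<le>N. \<Sum>b\<le>N. \<Sum>c\<le>N. \<Sum>d\<le>N. f a c * h b d)"
    by (intro sum_mono tri_le mult_nonneg_nonneg f0 h0)
  also have "\<dots> = (\<Sum>a\<le>N. \<Sum>c\<le>N. f a c) * (\<Sum>b\<le>N. \<Sum>d\<le>N. h b d)"
    by (simp only: sum_product)
  also have "\<dots> = S r D N F * S r D N H" by (simp add: S_def f_def h_def)
  finally show ?thesis .
qed

lemma delta0: "(\<Sum>j\<le>N. (if j = 0 then 1 else 0) * (D::real) ^ j) = 1"
  by (induction N) auto

lemma S_one: "S r D N 1 = 1"
proof -
  have "S r D N 1 = (\<Sum>n\<le>N. if n = 0 then (\<Sum>j\<le>N. if j = 0 then 1 else 0) else 0)"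
    unfolding S_def
    apply (intro sum.cong refl)
    apply (auto simp: delta0)
    done
  also have "\<dots> = 1" by simp
  finally show ?thesis .
qed

lemma S_power:
  assumes "NN F" "0 \<le> r" "0 \<le> D"
  shows "S r D N (F^k) \<le> (S r D N F)^k"
proof (induction k)
  case 0 then show ?case by (simp add: S_one)
next
  case (Suc k)
  have "S r D N (F^Suc k) = S r D N (F * F^k)" by simp
  also have "\<dots> \<le> S r D N F * S r D N (F^k)"
    using assms by (intro S_mult NN_power)
  also have "\<dots> \<le> S r D N F * (S r D N F)^k"
    using Suc assms by (intro mult_left_mono S_nonneg)
  finally show ?case by simp
qed

lemma geom_le: "0 \<le> (u::real) \<Longrightarrow> u < 1 \<Longrightarrow> (\<Sum>j\<le>N. u^j) \<le> 1/(1-u)"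
proof -
  assume u: "0 \<le> u" "u < 1"
  have "(\<Sum>j\<le>N. u^j) = (\<Sum>j<Suc N. u^j)" by (simp add: lessThan_Suc_atMost)
  also have "\<dots> = (1 - u^Suc N)/(1-u)" using u by (simp add: sum_gp_strict field_simps)
  also have "\<dots> \<le> 1/(1-u)" using u by (intro divide_right_mono) auto
  finally show ?thesis .
qed

lemma S_Gi:
  assumes "0 \<le> r" "0 \<le> D" "r^i * D < 1"
  shows "S r D N (Gi i) \<le> 1/(1 - r^i * D)"
proof -
  have "S r D N (Gi i) = (\<Sum>j\<le>N. \<Sum>n\<le>N. (if n = i*j then 1 else 0) * r^n * D^j)"
    unfolding S_def Gi_nth by (rule sum.swap)
  also have "\<dots> = (\<Sum>j\<le>N. if i*j \<le> N then (r^i*D)^j else 0)"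
    by (intro sum.cong refl) (auto simp: if_distrib[where f="\<lambda>x. x * _"] sum.delta power_mult power_mult_distrib cong: if_cong)
  also have "\<dots> \<le> (\<Sum>j\<le>N. (r^i*D)^j)"
    using assms by (intro sum_mono) auto
  also have "\<dots> \<le> 1/(1 - r^i*D)" using assms by (intro geom_le) auto
  finally show ?thesis .
qed


lemma S_P:
  assumes "0 \<le> r" "0 \<le> D"
  shows "S r D N (P e M) \<le> (\<Prod>k<M. S r D N (gen_factor e (Suc k)))"
proof (induction M)
  case 0 then show ?case by (simp add: P_def S_one)
next
  case (Suc M)
  have "S r D N (P e (Suc M)) = S r D N (P e M * gen_factor e (Suc M))" by (simp add: P_def)
  also have "\<dots> \<le> S r D N (P e M) * S r D N (gen_factor e (Suc M))"
    using assms by (intro S_mult NN_P NN_gf)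
  also have "\<dots> \<le> (\<Prod>k<M. S r D N (gen_factor e (Suc k))) * S r D N (gen_factor e (Suc M))"
    using Suc assms by (intro mult_right_mono S_nonneg NN_gf)
  finally show ?case by simp
qed

lemma inv_exp: "0 \<le> (u::real) \<Longrightarrow> u \<le> 2/3 \<Longrightarrow> 1/(1-u) \<le> exp (3*u)"
proof -
  assume u: "0 \<le> u" "u \<le> 2/3"
  have "1/(1-u) = 1 + u/(1-u)" using u by (simp add: field_simps)
  also have "u/(1-u) \<le> 3*u" using u mult_left_mono[of "u*3" 2 u] by (simp add: field_simps)
  hence "1 + u/(1-u) \<le> 1 + 3*u" by simp
  also have "\<dots> \<le> exp (3*u)" by (rule exp_ge_add_one_self)
  finally show ?thesis by simp
qed

lemma S_gf:
  assumes "q \<ge> 2" "i \<ge> 1"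
  shows "S (1/q) (4/3) N (gen_factor e i) \<le> exp (real (e i) * (3 * ((1/q)^i * (4/3))))"
proof -
  define u where "u = (1/q)^i * (4/3::real)"
  have "q^i \<ge> q^1" using assms by (intro power_increasing) auto
  hence qi: "q^i \<ge> 2" using assms by simp
  have u0: "0 \<le> u" using assms by (simp add: u_def)
  have u23: "u \<le> 2/3" using qi by (simp add: u_def power_one_over field_simps)
  have "S (1/q) (4/3) N (gen_factor e i) = S (1/q) (4/3) N ((Gi i)^(e i))"
    using assms by (simp add: gen_factor_eq)
  also have "\<dots> \<le> (S (1/q) (4/3) N (Gi i))^(e i)"
    using assms by (intro S_power NN_Gi) auto
  also have "\<dots> \<le> (1/(1-u))^(e i)"
  proof (rule power_mono)
    show "S (1/q) (4/3) N (Gi i) \<le> 1/(1-u)"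
      unfolding u_def using assms u23 by (intro S_Gi) (auto simp: u_def)
    show "0 \<le> S (1/q) (4/3) N (Gi i)" using assms by (intro S_nonneg NN_Gi) auto
  qed
  also have "\<dots> \<le> (exp (3*u))^(e i)"
    using u0 u23 by (intro power_mono inv_exp) auto
  also have "\<dots> = exp (real (e i) * (3*u))" by (simp add: exp_of_nat_mult)
  finally show ?thesis by (simp add: u_def)
qed

lemma harm_bound: "n \<ge> 1 \<Longrightarrow> (\<Sum>k<n. 1/real (Suc k)) \<le> 1 + ln (real n)"
proof (induction n rule: dec_induct)
  case base then show ?case by simp
next
  case (step n)
  have "ln (real n / real (Suc n)) \<le> real n / real (Suc n) - 1"
    using step by (intro ln_le_minus_one) auto
  also have "\<dots> = - 1/real (Suc n)" by (simp add: field_simps)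
  finally have "1/real (Suc n) \<le> ln (real (Suc n)) - ln (real n)"
    using step by (simp add: ln_div)
  then show ?case using step by simp
qed

lemma main_bound:
  assumes q: "q \<ge> 2" and up: "\<forall>i\<ge>1. real (e i) \<le> a2 * q ^ i / real i" and n: "n \<ge> 1"
  shows "(\<Sum>j\<le>n. cij e n j * (4/3)^j) \<le> q^n * exp (4*a2*(\<Sum>k<n. 1/real (Suc k)))"
proof -
  define r where "r = 1/q"
  define D where "D = (4/3::real)"
  have r0: "0 \<le> r" "r > 0" using q by (auto simp: r_def)
  have D0: "0 \<le> D" by (simp add: D_def)
  have "(\<Sum>j\<le>n. cij e n j * D^j) * r^n = (\<Sum>j\<le>n. P e n $ n $ j * r^n * D^j)"
    unfolding sum_distrib_right by (intro sum.cong refl) (simp add: cij_eq algebra_simps)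
  also have "\<dots> \<le> S r D n (P e n)"
    unfolding S_def using NN_P[of e n] r0 D0
    by (intro member_le_sum[where f="\<lambda>m. \<Sum>j\<le>n. P e n $ m $ j * r^m * D^j"] sum_nonneg mult_nonneg_nonneg)
       (auto simp: NN_def)
  also have "\<dots> \<le> (\<Prod>k<n. S r D n (gen_factor e (Suc k)))"
    using S_P[OF r0(1) D0] by blast
  also have "\<dots> \<le> (\<Prod>k<n. exp (4*a2*(1/real (Suc k))))"
  proof (intro prod_mono conjI)
    fix k assume "k \<in> {..<n}"
    show "0 \<le> S r D n (gen_factor e (Suc k))" using r0 D0 by (intro S_nonneg NN_gf)
    have "S r D n (gen_factor e (Suc k)) \<le> exp (real (e (Suc k)) * (3 * ((1/q)^Suc k * (4/3))))"
      unfolding r_def D_def using q by (intro S_gf) auto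
    also have "\<dots> \<le> exp (4*a2*(1/real (Suc k)))"
    proof -
      have qk: "q^Suc k > 0" using q by simp
      have "real (e (Suc k)) \<le> a2 * q^Suc k / real (Suc k)" using up by auto
      hence "real (e (Suc k)) * (3 * ((1/q)^Suc k * (4/3))) \<le> a2 * q^Suc k / real (Suc k) * (3 * ((1/q)^Suc k * (4/3)))"
        using q by (intro mult_right_mono) auto
      also have "\<dots> = 4*a2*(1/real (Suc k))" using qk q by (simp add: power_one_over field_simps)
      finally show ?thesis by simp
    qed
    finally show "S r D n (gen_factor e (Suc k)) \<le> exp (4*a2*(1/real (Suc k)))" .
  qed
  also have "\<dots> = exp (4*a2*(\<Sum>k<n. 1/real (Suc k)))"
    by (simp add: exp_sum sum_distrib_left)
  finally have "(\<Sum>j\<le>n. cij e n j * D^j) * r^n \<le> exp (4*a2*(\<Sum>k<n. 1/real (Suc k)))" .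
  hence "(\<Sum>j\<le>n. cij e n j * D^j) * r^n * q^n \<le> exp (4*a2*(\<Sum>k<n. 1/real (Suc k))) * q^n"
    using q by (intro mult_right_mono) auto
  moreover have "r^n * q^n = 1" using q by (simp add: r_def power_one_over field_simps)
  ultimately have "(\<Sum>j\<le>n. cij e n j * D^j) * (r^n * q^n) \<le> exp (4*a2*(\<Sum>k<n. 1/real (Suc k))) * q^n"
    by (simp only: mult.assoc)
  then show ?thesis using \<open>r^n * q^n = 1\<close> by (simp add: D_def mult.commute)
qed


lemma cij_nonneg: "0 \<le> cij e n j"
  using NN_P[of e n] by (simp add: cij_eq NN_def)

lemma alg_id:
  fixes Q E P Dm a1 N :: real
  assumes "Q > 0" "a1 > 0" "N > 0" "Dm > 0"
  shows "(Q * (E * P) / Dm) / (a1 * Q / N) = (E / a1) * (P * N) / Dm"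
  using assms by (simp add: field_simps)

theorem proposition2p3:
  fixes a1 a2 :: real
  assumes "0 < a1" and "a1 \<le> a2"
  shows "\<exists>C D :: real. D > 1 \<and>
    (\<forall>(q::real) (e::nat \<Rightarrow> nat).
       q \<ge> 2 \<longrightarrow>
       (\<forall>n\<ge>1. a1 * q ^ n / real n \<le> real (e n) \<and> real (e n) \<le> a2 * q ^ n / real n) \<longrightarrow>
       (\<forall>n m. 1 \<le> n \<longrightarrow> m \<le> n \<longrightarrow>
          (\<Sum>j=m+1..n. cij e n j) / (\<Sum>j=0..n. cij e n j)
            \<le> real n powr C * D powr (- real m)))"
proof -
  define \<kappa> where "\<kappa> = 4 * a2"
  define M where "M = exp \<kappa> / a1"
  define K where "K = max 0 (log 2 M)"
  define C where "C = \<kappa> + 1 + K"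
  define D :: real where "D = 4/3"
  have a2: "0 < a2" using assms by simp
  have K0: "0 \<le> K" by (simp add: K_def)
  have M2K: "M \<le> 2 powr K"
  proof (cases "M \<le> 1")
    case True then show ?thesis using K0 by (smt (verit) ge_one_powr_ge_zero)
  next
    case False
    then have "2 powr (log 2 M) = M" by simp
    then show ?thesis unfolding K_def using False by (smt (verit, best) powr_mono)
  qed
  have C0: "0 \<le> C" using K0 a2 by (simp add: C_def \<kappa>_def)
  show ?thesis
  proof (rule exI[of _ C], rule exI[of _ D], intro conjI allI impI)
    show "1 < D" by (simp add: D_def)
  next
    fix q :: real and e :: "nat \<Rightarrow> nat" and n m :: nat
    assume q: "q \<ge> 2"
      and eb: "\<forall>n\<ge>1. a1 * q ^ n / real n \<le> real (e n) \<and> real (e n) \<le> a2 * q ^ n / real n"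
      and n: "1 \<le> n" and mn: "m \<le> n"
    define num where "num = (\<Sum>j=m+1..n. cij e n j)"
    define den where "den = (\<Sum>j=0..n. cij e n j)"
    have RHS0: "0 < real n powr C * D powr (- real m)" using n by (simp add: D_def)
    have num0: "0 \<le> num" by (simp add: num_def sum_nonneg cij_nonneg)
    have den0: "0 \<le> den" by (simp add: den_def sum_nonneg cij_nonneg)
    have "num / den \<le> real n powr C * D powr (- real m)"
    proof (cases "m = n")
      case True
      then have "num = 0" by (simp add: num_def)
      then show ?thesis using RHS0 by simp
    next
      case mlt: False
      show ?thesis
      proof (cases "n = 1")
        case True
        with mlt mn have m0: "m = 0" by simp
        have "num \<le> den" unfolding num_def den_def using cij_nonneg
          by (intro sum_mono2) auto
        hence "num / den \<le> 1" using num0 den0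
          by (cases "den = 0") (auto simp: divide_le_eq)
        then show ?thesis using True m0 by (simp add: D_def)
      next
        case False
        with n have n2: "n \<ge> 2" by simp
        have qn: "q^n > 0" using q by simp
        have "a1 * q^n / real n \<le> real (e n)" using eb n by auto
        also have "\<dots> \<le> cij e n 1" using c1_ge[OF n] by (simp add: cij_eq)
        also have "\<dots> \<le> den" unfolding den_def using n cij_nonneg
          by (intro member_le_sum) auto
        finally have denlb: "a1 * q^n / real n \<le> den" .
        have lb0: "0 < a1 * q^n / real n" using assms qn n by simp
        define T where "T = (\<Sum>j\<le>n. cij e n j * D^j)"
        have "num \<le> (\<Sum>j=m+1..n. cij e n j * D^j / D^m)"
          unfolding num_def
        proof (intro sum_mono)
          fix j assume j: "j \<in> {m+1..n}"
          have "D^m \<le> D^j" using j by (intro power_increasing) (auto simp: D_def)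
          hence "1 \<le> D^j / D^m" by (simp add: D_def)
          then show "cij e n j \<le> cij e n j * D^j / D^m"
            using cij_nonneg[of e n j] mult_left_mono[of 1 "D^j / D^m" "cij e n j"] by simp
        qed
        also have "\<dots> = (\<Sum>j=m+1..n. cij e n j * D^j) / D^m" by (simp add: sum_divide_distrib)
        also have "\<dots> \<le> T / D^m" unfolding T_def
          using cij_nonneg by (intro divide_right_mono sum_mono2) (auto simp: D_def)
        finally have numub: "num \<le> T / D^m" .
        have "T \<le> q^n * exp (4*a2*(\<Sum>k<n. 1/real (Suc k)))"
          unfolding T_def D_def using q eb n by (intro main_bound) auto
        also have "\<dots> \<le> q^n * exp (\<kappa> * (1 + ln (real n)))"
          using harm_bound[OF n] qn a2 by (simp add: \<kappa>_def)
        also have "exp (\<kappa> * (1 + ln (real n))) = exp \<kappa> * real n powr \<kappa>"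
          using n by (simp add: powr_def distrib_left exp_add)
        finally have Tub: "T \<le> q^n * (exp \<kappa> * real n powr \<kappa>)" .
        have "num / den \<le> (T / D^m) / (a1 * q^n / real n)"
          using numub denlb lb0 num0 by (intro frac_le) auto
        also have "\<dots> \<le> (q^n * (exp \<kappa> * real n powr \<kappa>) / D^m) / (a1 * q^n / real n)"
          using Tub lb0 by (intro divide_right_mono) (auto simp: D_def)
        also have "\<dots> = M * (real n powr \<kappa> * real n) / D^m"
          unfolding M_def by (rule alg_id) (use qn n assms in \<open>auto simp: D_def\<close>)
        also have "real n powr \<kappa> * real n = real n powr (\<kappa> + 1)"
          using n by (simp add: powr_add)
        also have "M * real n powr (\<kappa> + 1) \<le> real n powr K * real n powr (\<kappa> + 1)"
        proof (rule mult_right_mono)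
          have "2 powr K \<le> real n powr K" using n2 K0 by (intro powr_mono2) auto
          then show "M \<le> real n powr K" using M2K by simp
        qed simp
        also have "real n powr K * real n powr (\<kappa> + 1) = real n powr C"
          by (simp add: C_def powr_add[symmetric] add_ac)
        finally have "num / den \<le> real n powr C / D^m" by (simp add: D_def divide_right_mono)
        also have "\<dots> = real n powr C * D powr (- real m)"
        proof -
          have Dpos: "D > 0" by (simp add: D_def)
          have "D powr (- real m) = 1 / D^m"
            by (simp only: powr_minus_divide powr_realpow[OF Dpos])
          then show ?thesis by simp
        qed
        finally show ?thesis .
      qed
    qed
    then show "(\<Sum>j=m+1..n. cij e n j) / (\<Sum>j=0..n. cij e n j) \<le> real n powr C * D powr (- real m)"
      by (simp only: num_def den_def)
  qed
qed

end
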